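(* There exist absolute constants $C_1,C_2>0$ such that the following holds. Let $\Xi\in(-1,1)^{n\times n}$ be a symmetric matrix whose entries $\Xi_{ij}$, $1\le i\le j\le n$, are independent Bernoulli errors. Let the index set $\{1,\dots,n\}$ be partitioned into $K$ groups, so that $\Xi$ is partitioned into $K^2$ submatrices $\Xi^{(k,l)}$ with $\Xi^{(k,l)}=(\Xi^{(l,k)})^T$, and let $J^{(k,l)}=J_{k,l}\times J_{l,k}$, $k,l=1,\dots,K$, where $J_{k,l}$ is a subset of group $k$. Then for any $x>0$, $$\mathbb P\Big\{\sum_{k,l=1}^K\big\|\Pi_{J^{(k,l)}}(\Xi^{(k,l)})\big\|_{op}^2\le C_1|J|+C_2x\Big\}\ge1-e^{-x},$$ where $|J|=\sum_{k,l}|J_{k,l}|$; $C_1,C_2$ do not depend on $n$, $K$, or the sets $J_{k,l}$.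
   Context: A Bernoulli error is a random variable $\xi=b-p$ with $b\sim\mathrm{Bernoulli}(p)$, $p\in[0,1]$. $\Xi^{(k,l)}$ is the submatrix of $\Xi$ with rows in group $k$ and columns in group $l$. $\Pi_{J^{(k,l)}}(X)$ sets entries of $X$ outside $J^{(k,l)}$ to zero. $\|\cdot\|_{op}$ is the spectral norm. *)

theory Defs
  imports "HOL-Analysis.Analysis" "HOL-Probability.Probability"
begin

text \<open>Index pairs (i,j) with i \<le> j < n: the independent upper-triangular entries.\<close>
definition upper_idx :: "nat \<Rightarrow> (nat \<times> nat) set" where
  "upper_idx n = {(i, j). i \<le> j \<and> j < n}"

definition bern_law :: "nat \<Rightarrow> (nat \<Rightarrow> nat \<Rightarrow> real) \<Rightarrow> (nat \<times> nat \<Rightarrow> bool) pmf" where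
  "bern_law n p = Pi_pmf (upper_idx n) False (\<lambda>(i, j). bernoulli_pmf (p i j))"

definition Xi :: "(nat \<Rightarrow> nat \<Rightarrow> real) \<Rightarrow> (nat \<times> nat \<Rightarrow> bool) \<Rightarrow> nat \<Rightarrow> nat \<Rightarrow> real" where
  "Xi p b i j = (if i \<le> j then of_bool (b (i, j)) - p i j else of_bool (b (j, i)) - p j i)"

definition op_norm :: "nat set \<Rightarrow> nat set \<Rightarrow> (nat \<Rightarrow> nat \<Rightarrow> real) \<Rightarrow> real" where
  "op_norm R C A = Sup {sqrt (\<Sum>i\<in>R. (\<Sum>j\<in>C. A i j * v j)^2) | v. (\<Sum>j\<in>C. (v j)^2) \<le> 1}"

text \<open>Pi_{J^{(k,l)}}(Xi^{(k,l)}): the block with rows in group k and columns in group l,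
  entries outside J_{k,l} \<times> J_{l,k} set to zero.\<close>
definition proj_block ::
  "(nat \<Rightarrow> nat \<Rightarrow> nat set) \<Rightarrow> nat \<Rightarrow> nat \<Rightarrow> (nat \<Rightarrow> nat \<Rightarrow> real) \<Rightarrow> nat \<Rightarrow> nat \<Rightarrow> real" where
  "proj_block J k l X i j = (if i \<in> J k l \<and> j \<in> J l k then X i j else 0)"

end

theory Submission
  imports Defs "HOL-Probability.Probability"
begin

lemma geo_int_sum: "(\<Sum>t\<in>{-int L..int L}. (2::nat)^(nat(int L - \<bar>t\<bar>))) + 2 = 3 * 2^L"
proof (induction L)
  case 0 then show ?case by simp
next
  case (Suc L)
  have eq: "{-int (Suc L)..int (Suc L)} = insert (-int (Suc L)) (insert (int (Suc L)) {-int L..int L})"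
    by auto
  have "(\<Sum>t\<in>{-int (Suc L)..int (Suc L)}. (2::nat)^(nat(int (Suc L) - \<bar>t\<bar>)))
      = 1 + 1 + (\<Sum>t\<in>{-int L..int L}. (2::nat)^(nat(int (Suc L) - \<bar>t\<bar>)))"
    unfolding eq by (simp)
  also have "(\<Sum>t\<in>{-int L..int L}. (2::nat)^(nat(int (Suc L) - \<bar>t\<bar>)))
      = (\<Sum>t\<in>{-int L..int L}. 2 * (2::nat)^(nat(int L - \<bar>t\<bar>)))"
  proof (rule sum.cong)
    fix t assume "t \<in> {-int L..int L}"
    then have "nat(int (Suc L) - \<bar>t\<bar>) = Suc (nat(int L - \<bar>t\<bar>))" by auto
    then show "(2::nat)^(nat(int (Suc L) - \<bar>t\<bar>)) = 2 * (2::nat)^(nat(int L - \<bar>t\<bar>))" by simp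
  qed simp
  finally show ?case using Suc.IH by (simp add: sum_distrib_left[symmetric])
qed

definition zset :: "'a set \<Rightarrow> nat \<Rightarrow> ('a \<Rightarrow> int) set" where
  "zset I L = {z. (\<forall>i. i \<notin> I \<longrightarrow> z i = 0) \<and> (\<Sum>i\<in>I. \<bar>z i\<bar>) \<le> int L}"

lemma zset_card: "finite I \<Longrightarrow> finite (zset I L) \<and> card (zset I L) \<le> 4^card I * 2^L"
proof (induction I arbitrary: L rule: finite_induct)
  case empty
  have e: "zset {} L = {\<lambda>_. 0}" by (auto simp: zset_def)
  show ?case unfolding e by simp
next
  case (insert a I)
  let ?U = "\<Union>t\<in>{-int L..int L}. (\<lambda>z. z(a:=t)) ` zset I (nat (int L - \<bar>t\<bar>))"
  have sub: "zset (insert a I) L \<subseteq> ?U"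
  proof
    fix z assume z: "z \<in> zset (insert a I)L"
    have s: "(\<Sum>i\<in>insert a I. \<bar>z i\<bar>) = \<bar>z a\<bar> + (\<Sum>i\<in>I. \<bar>z i\<bar>)"
      using insert by simp
    have nn: "(\<Sum>i\<in>I. \<bar>z i\<bar>) \<ge> 0" by (rule sum_nonneg) simp
    have "(\<Sum>i\<in>insert a I. \<bar>z i\<bar>) \<le> int L" using z by (simp add: zset_def)
    then have "\<bar>z a\<bar> \<le> int L" using s nn by linarith
    then have za: "z a \<in> {-int L..int L}" by auto
    have "(\<Sum>i\<in>I. \<bar>(z(a:=0)) i\<bar>) = (\<Sum>i\<in>I. \<bar>z i\<bar>)"
      using insert by (intro sum.cong) auto
    then have "z(a:=0) \<in> zset I (nat (int L - \<bar>z a\<bar>))"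
      using z s nn insert by (auto simp: zset_def)
    moreover have "z = (z(a:=0))(a := z a)" by simp
    ultimately show "z \<in> ?U" using za by blast
  qed
  have fin: "finite ?U" using insert.IH by auto
  have "card ?U \<le> (\<Sum>t\<in>{-int L..int L}. card ((\<lambda>z. z(a:=t)) ` zset I (nat (int L - \<bar>t\<bar>))))"
    by (rule card_UN_le) simp
  also have "\<dots> \<le> (\<Sum>t\<in>{-int L..int L}. 4^card I * 2^(nat (int L - \<bar>t\<bar>)))"
    by (intro sum_mono order.trans[OF card_image_le]) (use insert.IH in auto)
  also have "\<dots> = 4^card I * (\<Sum>t\<in>{-int L..int L}. 2^(nat (int L - \<bar>t\<bar>)))"
    by (simp add: sum_distrib_left)
  also have "\<dots> \<le> 4^card I * (3 * 2^L)"
    using geo_int_sum[of L] by (intro mult_left_mono) linarith+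
  also have "\<dots> \<le> 4^card (insert a I) * 2^L" using insert by simp
  finally show ?case using sub fin by (meson card_mono finite_subset order.trans)
qed

lemma L2_sq: "(L2_set f A)^2 = (\<Sum>i\<in>A. (f i)^2)"
  unfolding L2_set_def by (simp add: sum_nonneg)

lemma cs_abs: "\<bar>\<Sum>i\<in>A. f i * g i\<bar> \<le> L2_set f A * L2_set g A"
proof -
  have "\<bar>\<Sum>i\<in>A. f i * g i\<bar> \<le> (\<Sum>i\<in>A. \<bar>f i * g i\<bar>)" by (rule sum_abs)
  also have "\<dots> = (\<Sum>i\<in>A. \<bar>f i\<bar> * \<bar>g i\<bar>)" by (simp add: abs_mult)
  also have "\<dots> \<le> L2_set f A * L2_set g A" by (rule L2_set_mult_ineq)
  finally show ?thesis .
qed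

lemma int_abs_le_sq: "\<bar>k::int\<bar> \<le> k^2"
proof (cases "k = 0")
  case False
  then have "\<bar>k\<bar> * 1 \<le> \<bar>k\<bar> * \<bar>k\<bar>" by (intro mult_left_mono) auto
  then show ?thesis by (simp add: power2_eq_square abs_mult_self_eq)
qed simp

lemma L2_diff_comm: "L2_set (\<lambda>i. f i - g i) A = L2_set (\<lambda>i. g i - f i) A"
  unfolding L2_set_def by (simp add: power2_commute)

lemma L2_diff_tri: "L2_set g A \<le> L2_set f A + L2_set (\<lambda>i. g i - f i) A"
  using L2_set_triangle_ineq[of f "\<lambda>i. g i - f i" A] by simp

definition net :: "'a set \<Rightarrow> ('a \<Rightarrow> real) set" where
  "net I = {u. L2_set u I \<le> 5/4} \<inter>
     (\<lambda>z i. real_of_int (z i) / (2 * sqrt (card I))) ` zset I (7 * card I)"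

lemma net_norm: "u \<in> net I \<Longrightarrow> L2_set u I \<le> 5/4"
  by (auto simp: net_def)

lemma net_card: assumes "finite I" shows "finite (net I)" "card (net I) \<le> 512 ^ card I"
proof -
  have z: "finite (zset I (7 * card I))" "card (zset I (7 * card I)) \<le> 4^card I * 2^(7*card I)"
    using zset_card[OF assms] by auto
  have "4^card I * 2^(7*card I) = (512::nat) ^ card I"
    by (simp add: power_mult power_mult_distrib[symmetric])
  with z have z2: "card (zset I (7 * card I)) \<le> 512 ^ card I" by simp
  show "finite (net I)" unfolding net_def using z by auto
  have "card (net I) \<le> card ((\<lambda>z i. real_of_int (z i) / (2 * sqrt (card I))) ` zset I (7 * card I))"
    unfolding net_def using z by (intro card_mono) auto
  also have "\<dots> \<le> card (zset I (7 * card I))" by (rule card_image_le) (use z in auto)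
  finally show "card (net I) \<le> 512 ^ card I" using z2 by linarith
qed

lemma net_approx:
  assumes fin: "finite I" and u: "L2_set u I \<le> 1"
  shows "\<exists>u'\<in>net I. L2_set (\<lambda>i. u i - u' i) I \<le> 1/4"
proof -
  define m where "m = card I"
  define s where "s = 2 * sqrt (real m)"
  define z where "z = (\<lambda>i. if i \<in> I then round (u i * s) else 0)"
  define u' where "u' = (\<lambda>i. real_of_int (z i) / s)"
  show ?thesis
  proof (cases "m = 0")
    case True
    then have I: "I = {}" using fin m_def by simp
    have "z \<in> zset I (7 * card I)" by (simp add: zset_def z_def I)
    moreover have "u' = (\<lambda>i. real_of_int (z i) / (2 * sqrt (card I)))"
      by (simp add: u'_def s_def m_def)
    ultimately have "u' \<in> net I" unfolding net_def using I by auto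
    then show ?thesis using I by auto
  next
    case False
    then have sp: "s > 0" by (simp add: s_def)
    have err: "\<bar>u i - u' i\<bar> \<le> 1 / (2 * s)" if "i \<in> I" for i
    proof -
      have "\<bar>u i - u' i\<bar> = \<bar>of_int (round (u i * s)) - u i * s\<bar> / s"
        using that sp by (simp add: u'_def z_def field_simps abs_div_pos[symmetric] abs_minus_commute)
      also have "\<dots> \<le> (1/2) / s" using sp of_int_round_abs_le[of "u i * s"]
        by (intro divide_right_mono) auto
      finally show ?thesis by simp
    qed
    have "(\<Sum>i\<in>I. (u i - u' i)^2) \<le> (\<Sum>i\<in>I. (1 / (2 * s))^2)"
      by (intro sum_mono) (metis err abs_ge_zero power2_abs power_mono)
    also have "\<dots> = real m * (1 / (4 * s^2))" by (simp add: m_def power2_eq_square)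
    also have "\<dots> = 1/16" using False by (simp add: s_def power2_eq_square)
    finally have "(L2_set (\<lambda>i. u i - u' i) I)^2 \<le> (1/4)^2" unfolding L2_sq by (simp add: power_divide)
    then have d: "L2_set (\<lambda>i. u i - u' i) I \<le> 1/4"
      by (rule power2_le_imp_le) simp
    have n: "L2_set u' I \<le> 5/4"
      using L2_diff_tri[of u' I u] d u L2_diff_comm[of u' u I] by linarith
    have zs: "(\<Sum>i\<in>I. \<bar>z i\<bar>) \<le> int (7 * m)"
    proof -
      have "real_of_int (\<Sum>i\<in>I. \<bar>z i\<bar>) \<le> (\<Sum>i\<in>I. (real_of_int (z i))^2)"
      proof -
        have "real_of_int (\<Sum>i\<in>I. \<bar>z i\<bar>) = (\<Sum>i\<in>I. real_of_int \<bar>z i\<bar>)" by simp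
        also have "\<dots> \<le> (\<Sum>i\<in>I. (real_of_int (z i))^2)"
        proof (intro sum_mono)
          fix i
          have "\<bar>z i\<bar> \<le> (z i)^2" by (rule int_abs_le_sq)
          then show "real_of_int \<bar>z i\<bar> \<le> (real_of_int (z i))^2"
            by (metis of_int_le_iff of_int_power)
        qed
        finally show ?thesis .
      qed
      also have "\<dots> = (\<Sum>i\<in>I. s^2 * (u' i)^2)"
        using sp by (intro sum.cong) (auto simp: u'_def power_divide)
      also have "\<dots> = s^2 * (L2_set u' I)^2" by (simp add: L2_sq sum_distrib_left)
      also have "\<dots> \<le> s^2 * (5/4)^2"
        by (intro mult_left_mono power_mono n) auto
      also have "\<dots> \<le> 7 * real m" by (simp add: s_def power2_eq_square)
      finally show ?thesis by linarith
    qed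
    have "z \<in> zset I (7 * card I)" using zs by (auto simp: zset_def z_def m_def)
    moreover have "u' = (\<lambda>i. real_of_int (z i) / (2 * sqrt (card I)))"
      by (simp add: u'_def s_def m_def)
    ultimately have "u' \<in> net I" unfolding net_def using n by auto
    then show ?thesis using d by auto
  qed
qed

lemma zero_in_net: "(\<lambda>_. 0) \<in> net I"
proof -
  have "(\<lambda>_. 0::real) \<in> (\<lambda>z i. real_of_int (z i) / (2 * sqrt (card I))) ` zset I (7 * card I)"
    by (rule image_eqI[of _ _ "\<lambda>_. 0::int"]) (simp_all add: zset_def)
  then show ?thesis unfolding net_def by (auto simp: L2_set_def)
qed

definition opset :: "nat set \<Rightarrow> nat set \<Rightarrow> (nat \<Rightarrow> nat \<Rightarrow> real) \<Rightarrow> real set" where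
  "opset R C A = {sqrt (\<Sum>i\<in>R. (\<Sum>j\<in>C. A i j * v j)^2) | v. (\<Sum>j\<in>C. (v j)^2) \<le> 1}"

lemma op_norm_opset: "op_norm R C A = Sup (opset R C A)"
  by (simp add: op_norm_def opset_def)

lemma L2_le1_iff: "L2_set v C \<le> 1 \<longleftrightarrow> (\<Sum>j\<in>C. (v j)^2) \<le> 1"
  unfolding L2_set_def by simp

lemma opset_mem: "L2_set v C \<le> 1 \<Longrightarrow> L2_set (\<lambda>i. \<Sum>j\<in>C. A i j * v j) R \<in> opset R C A"
  unfolding opset_def L2_le1_iff by (auto simp: L2_set_def)

lemma L2_div: "c > 0 \<Longrightarrow> L2_set (\<lambda>i. f i / c) A = L2_set f A / c"
proof -
  assume c: "c > 0"
  have "(\<Sum>i\<in>A. (f i / c)^2) = (\<Sum>i\<in>A. (f i)^2) / c^2"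
    by (simp add: power_divide sum_divide_distrib)
  then show ?thesis using c by (simp add: L2_set_def real_sqrt_divide)
qed

lemma opset_bdd:
  shows "bdd_above (opset R C A)"
proof (rule bdd_aboveI)
  fix s assume "s \<in> opset R C A"
  then obtain v where v: "(\<Sum>j\<in>C. (v j)^2) \<le> 1" and s: "s = L2_set (\<lambda>i. \<Sum>j\<in>C. A i j * v j) R"
    unfolding opset_def by (auto simp: L2_set_def)
  have v1: "L2_set v C \<le> 1" using v L2_le1_iff by blast
  have "L2_set (\<lambda>i. \<Sum>j\<in>C. A i j * v j) R = L2_set (\<lambda>i. \<bar>\<Sum>j\<in>C. A i j * v j\<bar>) R"
    unfolding L2_set_def by simp
  also have "\<dots> \<le> L2_set (\<lambda>i. L2_set (A i) C) R"
  proof (rule L2_set_mono)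
    fix i
    have "\<bar>\<Sum>j\<in>C. A i j * v j\<bar> \<le> L2_set (A i) C * L2_set v C" by (rule cs_abs)
    also have "\<dots> \<le> L2_set (A i) C" using v1 by (simp add: mult_left_le)
    finally show "\<bar>\<Sum>j\<in>C. A i j * v j\<bar> \<le> L2_set (A i) C" .
  qed simp
  finally show "s \<le> L2_set (\<lambda>i. L2_set (A i) C) R" using s by simp
qed

lemma op_upper: "L2_set v C \<le> 1 \<Longrightarrow> L2_set (\<lambda>i. \<Sum>j\<in>C. A i j * v j) R \<le> op_norm R C A"
proof -
  assume "L2_set v C \<le> 1"
  then have "L2_set (\<lambda>i. \<Sum>j\<in>C. A i j * v j) R \<in> opset R C A" by (rule opset_mem)
  then show ?thesis unfolding op_norm_opset by (rule cSup_upper[OF _ opset_bdd])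
qed

lemma op_nonneg: "0 \<le> op_norm R C A"
  using op_upper[of "\<lambda>_. 0" C A R] by (simp add: L2_set_def)

lemma op_least:
  assumes "\<And>v. L2_set v C \<le> 1 \<Longrightarrow> L2_set (\<lambda>i. \<Sum>j\<in>C. A i j * v j) R \<le> \<beta>"
  shows "op_norm R C A \<le> \<beta>"
  unfolding op_norm_opset
proof (rule cSup_least)
  show "opset R C A \<noteq> {}" using opset_mem[of "\<lambda>_. 0" C] by (auto simp: L2_set_def)
  fix s assume "s \<in> opset R C A"
  then obtain v where v: "(\<Sum>j\<in>C. (v j)^2) \<le> 1" and s: "s = L2_set (\<lambda>i. \<Sum>j\<in>C. A i j * v j) R"
    unfolding opset_def by (auto simp: L2_set_def)
  then show "s \<le> \<beta>" using assms L2_le1_iff by blast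
qed

lemma op_scale:
  assumes C: "finite C"
  shows "L2_set (\<lambda>i. \<Sum>j\<in>C. A i j * d j) R \<le> op_norm R C A * L2_set d C"
proof (cases "L2_set d C = 0")
  case True
  then have "\<forall>j\<in>C. d j = 0" using L2_set_eq_0_iff[OF C] by blast
  then have "(\<lambda>i. \<Sum>j\<in>C. A i j * d j) = (\<lambda>i. 0)" by auto
  then show ?thesis using True by (simp add: L2_set_def)
next
  case False
  define c where "c = L2_set d C"
  have cp: "c > 0" using False by (simp add: c_def order_less_le)
  define v where "v = (\<lambda>j. d j / c)"
  have "L2_set v C = L2_set d C / c"
    using L2_div[OF cp] by (simp add: v_def)
  then have v1: "L2_set v C \<le> 1" using cp by (simp add: c_def)
  have "L2_set (\<lambda>i. \<Sum>j\<in>C. A i j * v j) R = L2_set (\<lambda>i. (\<Sum>j\<in>C. A i j * d j) / c) R"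
    by (simp add: v_def sum_divide_distrib)
  also have "\<dots> = L2_set (\<lambda>i. \<Sum>j\<in>C. A i j * d j) R / c"
    using cp by (simp add: L2_div)
  finally have "L2_set (\<lambda>i. \<Sum>j\<in>C. A i j * d j) R / c \<le> op_norm R C A"
    using op_upper[OF v1, of A R] by simp
  then show ?thesis using cp by (simp add: c_def field_simps)
qed

definition bil :: "nat set \<Rightarrow> nat set \<Rightarrow> (nat \<Rightarrow> nat \<Rightarrow> real) \<Rightarrow> (nat \<Rightarrow> real) \<Rightarrow> (nat \<Rightarrow> real) \<Rightarrow> real" where
  "bil R C A u v = (\<Sum>i\<in>R. u i * (\<Sum>j\<in>C. A i j * v j))"

lemma bil_bound:
  assumes "finite C"
  shows "bil R C A u v \<le> L2_set u R * op_norm R C A * L2_set v C"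
proof -
  have "bil R C A u v \<le> \<bar>bil R C A u v\<bar>" by simp
  also have "\<dots> \<le> L2_set u R * L2_set (\<lambda>i. \<Sum>j\<in>C. A i j * v j) R"
    unfolding bil_def by (rule cs_abs)
  also have "\<dots> \<le> L2_set u R * (op_norm R C A * L2_set v C)"
    by (intro mult_left_mono op_scale assms) simp
  finally show ?thesis by (simp add: mult.assoc)
qed

lemma bil_lin:
  "bil R C A u v = bil R C A u' v' + bil R C A (\<lambda>i. u i - u' i) v + bil R C A u' (\<lambda>j. v j - v' j)"
proof -
  have e: "\<And>i. (\<Sum>j\<in>C. A i j * (v j - v' j)) = (\<Sum>j\<in>C. A i j * v j) - (\<Sum>j\<in>C. A i j * v' j)"
    by (simp add: right_diff_distrib sum_subtractf)
  have "bil R C A u' v' + bil R C A (\<lambda>i. u i - u' i) v + bil R C A u' (\<lambda>j. v j - v' j)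
     = (\<Sum>i\<in>R. u' i * (\<Sum>j\<in>C. A i j * v' j) + (u i - u' i) * (\<Sum>j\<in>C. A i j * v j)
          + u' i * ((\<Sum>j\<in>C. A i j * v j) - (\<Sum>j\<in>C. A i j * v' j)))"
    unfolding bil_def e by (simp only: sum.distrib)
  also have "\<dots> = bil R C A u v" unfolding bil_def
    by (rule sum.cong) (simp_all add: algebra_simps)
  finally show ?thesis by simp
qed

lemma net_op:
  assumes R: "finite R" and C: "finite C"
  shows "op_norm R C A \<le> 16/7 * Max ((\<lambda>(u,v). bil R C A u v) ` (net R \<times> net C))"
proof -
  define Mx where "Mx = Max ((\<lambda>(u,v). bil R C A u v) ` (net R \<times> net C))"
  define \<sigma> where "\<sigma> = op_norm R C A"
  have fin: "finite ((\<lambda>(u,v). bil R C A u v) ` (net R \<times> net C))"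
    using net_card(1)[OF R] net_card(1)[OF C] by auto
  have Mx_ge: "bil R C A u v \<le> Mx" if "u \<in> net R" "v \<in> net C" for u v
    unfolding Mx_def by (rule Max_ge[OF fin]) (use that in force)
  have Mx0: "0 \<le> Mx" using Mx_ge[OF zero_in_net zero_in_net] by (simp add: bil_def)
  have s0: "0 \<le> \<sigma>" by (simp add: \<sigma>_def op_nonneg)
  have "\<sigma> \<le> Mx + 9/16 * \<sigma>"
    unfolding \<sigma>_def
  proof (rule op_least)
    fix v assume v: "L2_set v C \<le> 1"
    define y where "y = (\<lambda>i. \<Sum>j\<in>C. A i j * v j)"
    show "L2_set (\<lambda>i. \<Sum>j\<in>C. A i j * v j) R \<le> Mx + 9/16 * op_norm R C A"
    proof (cases "L2_set y R = 0")
      case True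
      then show ?thesis using Mx0 op_nonneg[of R C A] by (simp add: y_def)
    next
      case False
      define c where "c = L2_set y R"
      have cp: "c > 0" using False by (simp add: c_def order_less_le)
      define u0 where "u0 = (\<lambda>i. y i / c)"
      have "L2_set u0 R = L2_set y R / c"
        using L2_div[OF cp] by (simp add: u0_def)
      then have u01: "L2_set u0 R \<le> 1" using cp by (simp add: c_def)
      have bu0: "bil R C A u0 v = c"
      proof -
        have yi: "\<And>i. (\<Sum>j\<in>C. A i j * v j) = y i" by (simp add: y_def)
        have "bil R C A u0 v = (\<Sum>i\<in>R. y i / c * y i)"
          unfolding bil_def u0_def yi ..
        also have "\<dots> = (\<Sum>i\<in>R. (y i)^2) / c"
          by (simp add: sum_divide_distrib power2_eq_square)
        finally have "bil R C A u0 v = (\<Sum>i\<in>R. (y i)^2) / c" .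
        also have "\<dots> = c^2 / c" by (simp add: c_def L2_sq)
        finally show ?thesis using cp by (simp add: power2_eq_square)
      qed
      obtain u' where u': "u' \<in> net R" "L2_set (\<lambda>i. u0 i - u' i) R \<le> 1/4"
        using net_approx[OF R u01] by blast
      obtain v' where v': "v' \<in> net C" "L2_set (\<lambda>i. v i - v' i) C \<le> 1/4"
        using net_approx[OF C v] by blast
      have "L2_set (\<lambda>i. u0 i - u' i) R * \<sigma> * L2_set v C \<le> 1/4 * \<sigma> * 1"
        by (rule mult_mono[OF mult_right_mono]) (use u'(2) v s0 in auto)
      then have b1: "bil R C A (\<lambda>i. u0 i - u' i) v \<le> 1/4 * \<sigma> * 1"
        using bil_bound[OF C, of R A "\<lambda>i. u0 i - u' i" v] unfolding \<sigma>_def by linarith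
      have "L2_set u' R * \<sigma> * L2_set (\<lambda>j. v j - v' j) C \<le> 5/4 * \<sigma> * (1/4)"
        by (rule mult_mono[OF mult_right_mono]) (use net_norm[OF u'(1)] v'(2) s0 in auto)
      then have b2: "bil R C A u' (\<lambda>j. v j - v' j) \<le> 5/4 * \<sigma> * (1/4)"
        using bil_bound[OF C, of R A u' "\<lambda>j. v j - v' j"] unfolding \<sigma>_def by linarith
      have "c = bil R C A u' v' + bil R C A (\<lambda>i. u0 i - u' i) v + bil R C A u' (\<lambda>j. v j - v' j)"
        using bu0 bil_lin by metis
      also have "\<dots> \<le> Mx + 9/16 * \<sigma>" using Mx_ge[OF u'(1) v'(1)] b1 b2 by simp
      finally show ?thesis by (simp add: c_def y_def \<sigma>_def)
    qed
  qed
  then show ?thesis unfolding Mx_def[symmetric] \<sigma>_def[symmetric] by simp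
qed

lemma net_vec:
  fixes f :: "'a \<Rightarrow> real"
  assumes I: "finite I"
  shows "L2_set f I \<le> 4/3 * Max ((\<lambda>w. \<Sum>i\<in>I. w i * f i) ` net I)"
proof -
  define Mx where "Mx = Max ((\<lambda>w. \<Sum>i\<in>I. w i * f i) ` net I)"
  have fin: "finite ((\<lambda>w. \<Sum>i\<in>I. w i * f i) ` net I)" using net_card(1)[OF I] by auto
  have Mx_ge: "(\<Sum>i\<in>I. w i * f i) \<le> Mx" if "w \<in> net I" for w
    unfolding Mx_def by (rule Max_ge[OF fin]) (use that in force)
  have Mx0: "0 \<le> Mx" using Mx_ge[OF zero_in_net] by simp
  show ?thesis
  proof (cases "L2_set f I = 0")
    case True then show ?thesis using Mx0 unfolding Mx_def by simp
  next
    case False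
    define c where "c = L2_set f I"
    have cp: "c > 0" using False by (simp add: c_def order_less_le)
    define w0 where "w0 = (\<lambda>i. f i / c)"
    have "L2_set w0 I = L2_set f I / c"
      using L2_div[OF cp] by (simp add: w0_def)
    then have w01: "L2_set w0 I \<le> 1" using cp by (simp add: c_def)
    have bw: "(\<Sum>i\<in>I. w0 i * f i) = c"
    proof -
      have "(\<Sum>i\<in>I. w0 i * f i) = (\<Sum>i\<in>I. (f i)^2) / c"
        by (simp add: w0_def sum_divide_distrib power2_eq_square)
      also have "\<dots> = c^2 / c" by (simp add: c_def L2_sq)
      finally show ?thesis using cp by (simp add: power2_eq_square)
    qed
    obtain w' where w': "w' \<in> net I" "L2_set (\<lambda>i. w0 i - w' i) I \<le> 1/4"
      using net_approx[OF I w01] by blast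
    have e: "(\<Sum>i\<in>I. (w0 i - w' i) * f i) \<le> 1/4 * c"
    proof -
      have "(\<Sum>i\<in>I. (w0 i - w' i) * f i) \<le> L2_set (\<lambda>i. w0 i - w' i) I * L2_set f I"
        using cs_abs[of "\<lambda>i. w0 i - w' i" f I] by simp
      also have "\<dots> \<le> 1/4 * c" using mult_right_mono[OF w'(2), of "L2_set f I"] by (simp add: c_def)
      finally show ?thesis .
    qed
    have "(\<Sum>i\<in>I. w' i * f i) + (\<Sum>i\<in>I. (w0 i - w' i) * f i) = (\<Sum>i\<in>I. w' i * f i + (w0 i - w' i) * f i)"
      by (simp only: sum.distrib)
    also have "\<dots> = (\<Sum>i\<in>I. w0 i * f i)" by (rule sum.cong) (simp_all add: algebra_simps)
    finally have "c = (\<Sum>i\<in>I. w' i * f i) + (\<Sum>i\<in>I. (w0 i - w' i) * f i)"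
      using bw by simp
    then have "c \<le> Mx + 1/4 * c" using Mx_ge[OF w'(1)] e by linarith
    then show ?thesis by (simp add: c_def Mx_def)
  qed
qed

lemma finite_upper_idx: "finite (upper_idx n)"
proof -
  have "upper_idx n \<subseteq> {..<n} \<times> {..<n}" by (auto simp: upper_idx_def)
  then show ?thesis by (rule finite_subset) auto
qed

lemma hoeff_lin:
  fixes c :: "nat \<times> nat \<Rightarrow> real"
  assumes p: "\<forall>i j. i \<le> j \<and> j < n \<longrightarrow> 0 \<le> p i j \<and> p i j \<le> 1"
    and t: "t > 0"
    and D: "(\<Sum>e\<in>upper_idx n. (c e)^2) \<le> 8"
  shows "measure_pmf.prob (bern_law n p)
     {b. t \<le> (\<Sum>e\<in>upper_idx n. c e * (of_bool (b e) - case_prod p e))} \<le> exp (-(t^2)/16)"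
proof -
  define M where "M = bern_law n p"
  define X where "X = (\<lambda>e (b :: nat \<times> nat \<Rightarrow> bool). c e * (of_bool (b e) - case_prod p e))"
  have pe: "0 \<le> case_prod p e \<and> case_prod p e \<le> 1" if "e \<in> upper_idx n" for e
    using that p by (auto simp: upper_idx_def)
  have ind0: "prob_space.indep_vars (measure_pmf M) (\<lambda>_. count_space UNIV) (\<lambda>x f. f x) (upper_idx n)"
    unfolding M_def bern_law_def by (rule indep_vars_Pi_pmf[OF finite_upper_idx])
  have ind: "prob_space.indep_vars (measure_pmf M) (\<lambda>_. borel) X (upper_idx n)"
  proof -
    have "prob_space.indep_vars (measure_pmf M) (\<lambda>_. borel)
       (\<lambda>e x. (\<lambda>bb. c e * (of_bool bb - case_prod p e)) ((\<lambda>x f. f x) e x)) (upper_idx n)"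
      by (rule prob_space.indep_vars_compose2[OF measure_pmf.prob_space_axioms ind0]) simp
    then show ?thesis by (simp add: X_def)
  qed
  have EX: "measure_pmf.expectation M (X e) = 0" if "e \<in> upper_idx n" for e
  proof -
    have "measure_pmf.expectation M (X e)
        = measure_pmf.expectation (map_pmf (\<lambda>f. f e) M) (\<lambda>bb. c e * (of_bool bb - case_prod p e))"
      by (simp add: X_def)
    also have "map_pmf (\<lambda>f. f e) M = bernoulli_pmf (case_prod p e)"
      unfolding M_def bern_law_def using that
      by (subst Pi_pmf_component[OF finite_upper_idx]) (simp add: case_prod_beta)
    finally show ?thesis using pe[OF that] by (simp add: algebra_simps)
  qed
  interpret H: Hoeffding_ineq "measure_pmf M" "upper_idx n" X "\<lambda>e. - \<bar>c e\<bar>" "\<lambda>e. \<bar>c e\<bar>" 0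
  proof unfold_locales
    show "finite (upper_idx n)" by (rule finite_upper_idx)
    show "prob_space.indep_vars (measure_pmf M) (\<lambda>_. borel) X (upper_idx n)" by (rule ind)
    fix e assume e: "e \<in> upper_idx n"
    show "AE x in measure_pmf M. X e x \<in> {- \<bar>c e\<bar>..\<bar>c e\<bar>}"
    proof (rule AE_I2)
      fix x
      have a: "\<bar>of_bool (x e) - case_prod p e\<bar> \<le> (1::real)" using pe[OF e] by (cases "x e") auto
      have "\<bar>X e x\<bar> \<le> \<bar>c e\<bar>" unfolding X_def abs_mult
        using mult_left_mono[OF a, of "\<bar>c e\<bar>"] by simp
      then show "X e x \<in> {- \<bar>c e\<bar>..\<bar>c e\<bar>}" by auto
    qed
  next
    show "0 \<equiv> \<Sum>i\<in>upper_idx n. measure_pmf.expectation M (X i)"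
      using EX by simp
  qed
  show ?thesis
  proof (cases "(\<Sum>e\<in>upper_idx n. (\<bar>c e\<bar> - - \<bar>c e\<bar>)^2) > 0")
    case True
    have "measure_pmf.prob M {x \<in> space (measure_pmf M). (\<Sum>e\<in>upper_idx n. X e x) \<ge> 0 + t}
          \<le> exp (-2 * t^2 / (\<Sum>e\<in>upper_idx n. (\<bar>c e\<bar> - - \<bar>c e\<bar>)^2))"
      using H.Hoeffding_ineq_ge[OF _ True] t by simp
    also have "\<dots> \<le> exp (-(t^2)/16)"
    proof -
      have s: "(\<Sum>e\<in>upper_idx n. (\<bar>c e\<bar> - - \<bar>c e\<bar>)^2) = 4 * (\<Sum>e\<in>upper_idx n. (c e)^2)"
        by (simp add: sum_distrib_left power2_eq_square)
      have "-2 * t^2 / (\<Sum>e\<in>upper_idx n. (\<bar>c e\<bar> - - \<bar>c e\<bar>)^2) \<le> -(t^2)/16"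
        using True D t unfolding s
        by (simp add: field_simps)
      then show ?thesis by simp
    qed
    finally show ?thesis by (simp add: M_def X_def)
  next
    case False
    then have "\<forall>e\<in>upper_idx n. c e = 0"
      using sum_pos2 finite_upper_idx
      by (metis (no_types, lifting) abs_eq_0 diff_minus_eq_add linorder_not_le zero_less_power2 sum_nonneg
          add.inverse_neutral not_less_iff_gr_or_eq abs_ge_zero order_less_le zero_le_power2 add_nonneg_eq_0_iff)
    then have "{b. t \<le> (\<Sum>e\<in>upper_idx n. c e * (of_bool (b e) - case_prod p e))} = {}"
      using t by auto
    then show ?thesis by simp
  qed
qed

lemma split_sq_sum:
  "(\<Sum>i<n. \<Sum>j<n. g i j) =
   (\<Sum>e\<in>upper_idx n. g (fst e) (snd e) + (if fst e = snd e then 0 else g (snd e) (fst e)))"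
proof -
  define U where "U = upper_idx n"
  define Lo where "Lo = {(i,j). j < i \<and> i < n}"
  define Us where "Us = {(i,j). i < j \<and> j < n}"
  have finU: "finite U" unfolding U_def by (rule finite_upper_idx)
  have "(\<Sum>i<n. \<Sum>j<n. g i j) = (\<Sum>(i,j)\<in>{..<n} \<times> {..<n}. g i j)"
    by (rule sum.cartesian_product)
  also have "{..<n} \<times> {..<n} = U \<union> Lo" by (auto simp: U_def Lo_def upper_idx_def)
  also have "(\<Sum>(i,j)\<in>U \<union> Lo. g i j) = (\<Sum>(i,j)\<in>U. g i j) + (\<Sum>(i,j)\<in>Lo. g i j)"
  proof (rule sum.union_disjoint)
    show "finite U" by (rule finU)
    show "finite Lo" by (rule finite_subset[of _ "{..<n} \<times> {..<n}"]) (auto simp: Lo_def)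
    show "U \<inter> Lo = {}" by (auto simp: U_def Lo_def upper_idx_def)
  qed
  also have "(\<Sum>(i,j)\<in>Lo. g i j) = (\<Sum>(i,j)\<in>Us. g j i)"
  proof -
    have "Lo = prod.swap ` Us" by (auto simp: Lo_def Us_def image_iff)
    moreover have "inj_on prod.swap Us" by (rule inj_onI) (metis swap_swap)
    ultimately show ?thesis by (simp add: sum.reindex case_prod_beta)
  qed
  also have "\<dots> = (\<Sum>e\<in>U. (if fst e = snd e then 0 else g (snd e) (fst e)))"
  proof (rule sum.mono_neutral_cong_left)
    show "finite U" by (rule finU)
    show "Us \<subseteq> U" by (auto simp: Us_def U_def upper_idx_def)
    show "\<forall>e\<in>U - Us. (if fst e = snd e then 0 else g (snd e) (fst e)) = 0"
      by (auto simp: Us_def U_def upper_idx_def)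
    show "\<And>e. e \<in> Us \<Longrightarrow> (case e of (i, j) \<Rightarrow> g j i) = (if fst e = snd e then 0 else g (snd e) (fst e))"
      by (auto simp: Us_def)
  qed
  finally show ?thesis by (simp add: U_def sum.distrib case_prod_beta)
qed

lemma sq_sum_unique:
  fixes f :: "'a \<Rightarrow> real"
  assumes fin: "finite A" and u: "\<And>a b. a \<in> A \<Longrightarrow> b \<in> A \<Longrightarrow> f a \<noteq> 0 \<Longrightarrow> f b \<noteq> 0 \<Longrightarrow> a = b"
  shows "(\<Sum>a\<in>A. f a)^2 = (\<Sum>a\<in>A. (f a)^2)"
proof (cases "\<exists>a\<in>A. f a \<noteq> 0")
  case True
  then obtain a where a: "a \<in> A" "f a \<noteq> 0" by blast
  have z: "\<forall>b\<in>A - {a}. f b = 0" using u a by blast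
  have "(\<Sum>a\<in>A. f a) = f a" using sum.remove[OF fin a(1), of f] z by simp
  moreover have "(\<Sum>a\<in>A. (f a)^2) = (f a)^2" using sum.remove[OF fin a(1), of "\<lambda>x. (f x)^2"] z by simp
  ultimately show ?thesis by simp
next
  case False then show ?thesis by simp
qed

lemma sum_restrict2:
  fixes f :: "nat \<Rightarrow> nat \<Rightarrow> real"
  assumes A: "A \<subseteq> {..<n}" and B: "B \<subseteq> {..<n}"
  shows "(\<Sum>i<n. \<Sum>j<n. if i \<in> A \<and> j \<in> B then f i j else 0) = (\<Sum>i\<in>A. \<Sum>j\<in>B. f i j)"
proof -
  have "(\<Sum>i<n. \<Sum>j<n. if i \<in> A \<and> j \<in> B then f i j else 0)
      = (\<Sum>i<n. if i \<in> A then (\<Sum>j<n. if j \<in> B then f i j else 0) else 0)"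
    by (intro sum.cong) auto
  also have "\<dots> = (\<Sum>i\<in>A. (\<Sum>j<n. if j \<in> B then f i j else 0))"
    by (subst sum.inter_restrict[symmetric]) (use A in \<open>auto intro: arg_cong2[where f=sum]\<close>)
  also have "\<dots> = (\<Sum>i\<in>A. \<Sum>j\<in>B. f i j)"
  proof (rule sum.cong[OF refl])
    fix i
    show "(\<Sum>j<n. if j \<in> B then f i j else 0) = (\<Sum>j\<in>B. f i j)"
      by (subst sum.inter_restrict[symmetric]) (use B in \<open>auto intro: arg_cong2[where f=sum]\<close>)
  qed
  finally show ?thesis .
qed

definition Bn :: "nat \<Rightarrow> (nat \<Rightarrow> nat \<Rightarrow> nat set) \<Rightarrow> (nat \<times> nat) set" where
  "Bn K J = {kl \<in> {..<K} \<times> {..<K}. J (fst kl) (snd kl) \<noteq> {}}"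

definition Theta :: "nat \<Rightarrow> (nat \<Rightarrow> nat \<Rightarrow> nat set) \<Rightarrow>
    ((nat \<times> nat \<Rightarrow> real) \<times> (nat \<times> nat \<Rightarrow> (nat \<Rightarrow> real) \<times> (nat \<Rightarrow> real))) set" where
  "Theta K J = net (Bn K J) \<times> PiE (Bn K J) (\<lambda>kl. net (J (fst kl) (snd kl)) \<times> net (J (snd kl) (fst kl)))"

definition Fth where
  "Fth K J p \<theta> b = (\<Sum>kl\<in>Bn K J. fst \<theta> kl *
      bil (J (fst kl) (snd kl)) (J (snd kl) (fst kl)) (Xi p b) (fst (snd \<theta> kl)) (snd (snd \<theta> kl)))"

definition alpha where
  "alpha K J \<theta> i j = (\<Sum>kl\<in>Bn K J. (if i \<in> J (fst kl) (snd kl) \<and> j \<in> J (snd kl) (fst kl)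
      then fst \<theta> kl * fst (snd \<theta> kl) i * snd (snd \<theta> kl) j else 0))"

definition coef where
  "coef K J \<theta> e = alpha K J \<theta> (fst e) (snd e) + (if fst e = snd e then 0 else alpha K J \<theta> (snd e) (fst e))"

lemma swap3: "(\<Sum>a\<in>A. \<Sum>i\<in>I. \<Sum>j\<in>Jx. f a i j) = (\<Sum>i\<in>I. \<Sum>j\<in>Jx. \<Sum>a\<in>A. f a i j)"
proof -
  have "(\<Sum>a\<in>A. \<Sum>i\<in>I. \<Sum>j\<in>Jx. f a i j) = (\<Sum>i\<in>I. \<Sum>a\<in>A. \<Sum>j\<in>Jx. f a i j)"
    by (rule sum.swap)
  also have "\<dots> = (\<Sum>i\<in>I. \<Sum>j\<in>Jx. \<Sum>a\<in>A. f a i j)"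
    by (rule sum.cong[OF refl]) (rule sum.swap)
  finally show ?thesis .
qed

lemma finite_Bn: "finite (Bn K J)"
  by (rule finite_subset[of _ "{..<K} \<times> {..<K}"]) (auto simp: Bn_def)

context
  fixes n K :: nat and G :: "nat \<Rightarrow> nat set" and J :: "nat \<Rightarrow> nat \<Rightarrow> nat set"
  assumes cover: "(\<Union>k<K. G k) = {..<n}"
    and disj: "\<forall>k<K. \<forall>l<K. k \<noteq> l \<longrightarrow> G k \<inter> G l = {}"
    and JG: "\<forall>k<K. \<forall>l<K. J k l \<subseteq> G k"
begin

lemma J_sub: "k < K \<Longrightarrow> l < K \<Longrightarrow> J k l \<subseteq> {..<n}"
  using JG cover by blast

lemma J_fin: "k < K \<Longrightarrow> l < K \<Longrightarrow> finite (J k l)"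
  using J_sub finite_subset by blast

lemma Bn_sub: "kl \<in> Bn K J \<Longrightarrow> fst kl < K \<and> snd kl < K"
  by (auto simp: Bn_def)

lemma Fth_eq:
  "Fth K J p \<theta> b = (\<Sum>e\<in>upper_idx n. coef K J \<theta> e * (of_bool (b e) - case_prod p e))"
proof -
  define X where "X = Xi p b"
  have "Fth K J p \<theta> b = (\<Sum>kl\<in>Bn K J. \<Sum>i<n. \<Sum>j<n.
      (if i \<in> J (fst kl) (snd kl) \<and> j \<in> J (snd kl) (fst kl)
        then fst \<theta> kl * fst (snd \<theta> kl) i * snd (snd \<theta> kl) j * X i j else 0))"
    unfolding Fth_def
  proof (rule sum.cong[OF refl])
    fix kl assume kl: "kl \<in> Bn K J"
    have "fst \<theta> kl * bil (J (fst kl) (snd kl)) (J (snd kl) (fst kl)) (Xi p b) (fst (snd \<theta> kl)) (snd (snd \<theta> kl))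
      = (\<Sum>i\<in>J (fst kl) (snd kl). \<Sum>j\<in>J (snd kl) (fst kl). fst \<theta> kl * fst (snd \<theta> kl) i * snd (snd \<theta> kl) j * X i j)"
      unfolding bil_def X_def by (simp add: sum_distrib_left ac_simps)
    also have "\<dots> = (\<Sum>i<n. \<Sum>j<n.
      (if i \<in> J (fst kl) (snd kl) \<and> j \<in> J (snd kl) (fst kl)
        then fst \<theta> kl * fst (snd \<theta> kl) i * snd (snd \<theta> kl) j * X i j else 0))"
      using Bn_sub[OF kl] by (intro sum_restrict2[symmetric] J_sub) auto
    finally show "fst \<theta> kl * bil (J (fst kl) (snd kl)) (J (snd kl) (fst kl)) (Xi p b) (fst (snd \<theta> kl)) (snd (snd \<theta> kl)) = \<dots>" .
  qed
  also have "\<dots> = (\<Sum>i<n. \<Sum>j<n. \<Sum>kl\<in>Bn K J.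
      (if i \<in> J (fst kl) (snd kl) \<and> j \<in> J (snd kl) (fst kl)
        then fst \<theta> kl * fst (snd \<theta> kl) i * snd (snd \<theta> kl) j * X i j else 0))"
    by (rule swap3)
  also have "\<dots> = (\<Sum>i<n. \<Sum>j<n. alpha K J \<theta> i j * X i j)"
    unfolding alpha_def sum_distrib_right by (intro sum.cong refl) auto
  also have "\<dots> = (\<Sum>e\<in>upper_idx n. coef K J \<theta> e * (of_bool (b e) - case_prod p e))"
    unfolding split_sq_sum
  proof (rule sum.cong[OF refl])
    fix e assume e: "e \<in> upper_idx n"
    obtain i j where ij: "e = (i,j)" by (cases e)
    have le: "i \<le> j" using e ij by (auto simp: upper_idx_def)
    have x1: "X i j = of_bool (b e) - case_prod p e" using le ij by (simp add: X_def Xi_def)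
    have x2: "i \<noteq> j \<Longrightarrow> X j i = of_bool (b e) - case_prod p e" using le ij by (simp add: X_def Xi_def)
    show "alpha K J \<theta> (fst e) (snd e) * X (fst e) (snd e) +
        (if fst e = snd e then 0 else alpha K J \<theta> (snd e) (fst e) * X (snd e) (fst e)) =
        coef K J \<theta> e * (of_bool (b e) - case_prod p e)"
    proof (cases "i = j")
      case True
      show ?thesis by (simp add: ij[unfolded True] x1[unfolded True] coef_def True algebra_simps)
    next
      case False
      show ?thesis by (simp add: ij x1 x2[OF False] coef_def False algebra_simps)
    qed
  qed
  finally show ?thesis .
qed

lemma coef_var:
  assumes th: "\<theta> \<in> Theta K J"
  shows "(\<Sum>e\<in>upper_idx n. (coef K J \<theta> e)^2) \<le> 8"
proof -
  define w where "w = fst \<theta>"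
  define u where "u = (\<lambda>kl. fst (snd \<theta> kl))"
  define v where "v = (\<lambda>kl. snd (snd \<theta> kl))"
  have w: "L2_set w (Bn K J) \<le> 5/4" using th net_norm by (auto simp: Theta_def w_def)
  have uv: "L2_set (u kl) (J (fst kl) (snd kl)) \<le> 5/4 \<and> L2_set (v kl) (J (snd kl) (fst kl)) \<le> 5/4"
    if "kl \<in> Bn K J" for kl
  proof -
    have "snd \<theta> \<in> PiE (Bn K J) (\<lambda>kl. net (J (fst kl) (snd kl)) \<times> net (J (snd kl) (fst kl)))"
      using th by (simp add: Theta_def mem_Times_iff)
    then have "snd \<theta> kl \<in> net (J (fst kl) (snd kl)) \<times> net (J (snd kl) (fst kl))"
      using that by (rule PiE_mem)
    then show ?thesis unfolding u_def v_def mem_Times_iff using net_norm by blast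
  qed
  have a2: "(alpha K J \<theta> i j)^2 = (\<Sum>kl\<in>Bn K J. (if i \<in> J (fst kl) (snd kl) \<and> j \<in> J (snd kl) (fst kl)
      then (w kl * u kl i * v kl j)^2 else 0))" for i j
  proof -
    have "(alpha K J \<theta> i j)^2 = (\<Sum>kl\<in>Bn K J. (if i \<in> J (fst kl) (snd kl) \<and> j \<in> J (snd kl) (fst kl)
      then w kl * u kl i * v kl j else 0)^2)"
      unfolding alpha_def w_def u_def v_def
    proof (rule sq_sum_unique[OF finite_Bn])
      fix a c assume a: "a \<in> Bn K J" and c: "c \<in> Bn K J"
        and fa: "(if i \<in> J (fst a) (snd a) \<and> j \<in> J (snd a) (fst a) then fst \<theta> a * fst (snd \<theta> a) i * snd (snd \<theta> a) j else 0) \<noteq> 0"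
        and fc: "(if i \<in> J (fst c) (snd c) \<and> j \<in> J (snd c) (fst c) then fst \<theta> c * fst (snd \<theta> c) i * snd (snd \<theta> c) j else 0) \<noteq> 0"
      have ia: "i \<in> J (fst a) (snd a)" "j \<in> J (snd a) (fst a)" using fa by (auto split: if_splits)
      have ic: "i \<in> J (fst c) (snd c)" "j \<in> J (snd c) (fst c)" using fc by (auto split: if_splits)
      have ka: "fst a < K" "snd a < K" and kc: "fst c < K" "snd c < K" using Bn_sub a c by auto
      have "fst a = fst c"
      proof (rule ccontr)
        assume "fst a \<noteq> fst c"
        then have "G (fst a) \<inter> G (fst c) = {}" using disj ka kc by blast
        moreover have "i \<in> G (fst a)" "i \<in> G (fst c)" using ia ic JG ka kc by blast+
        ultimately show False by blast
      qed
      moreover have "snd a = snd c"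
      proof (rule ccontr)
        assume "snd a \<noteq> snd c"
        then have "G (snd a) \<inter> G (snd c) = {}" using disj ka kc by blast
        moreover have "j \<in> G (snd a)" "j \<in> G (snd c)" using ia ic JG ka kc by blast+
        ultimately show False by blast
      qed
      ultimately show "a = c" by (simp add: prod_eq_iff)
    qed
    also have "\<dots> = (\<Sum>kl\<in>Bn K J. (if i \<in> J (fst kl) (snd kl) \<and> j \<in> J (snd kl) (fst kl)
      then (w kl * u kl i * v kl j)^2 else 0))"
      by (intro sum.cong refl) simp
    finally show ?thesis .
  qed
  have "(\<Sum>e\<in>upper_idx n. (coef K J \<theta> e)^2)
      \<le> (\<Sum>e\<in>upper_idx n. 2 * (alpha K J \<theta> (fst e) (snd e))^2 +
            (if fst e = snd e then 0 else 2 * (alpha K J \<theta> (snd e) (fst e))^2))"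
  proof (rule sum_mono)
    fix e
    have sq: "(a + c)^2 \<le> 2 * a^2 + 2 * c^2" for a c :: real
    proof -
      have "(a + c)^2 = 2 * a^2 + 2 * c^2 - (a - c)^2" by (simp add: power2_eq_square algebra_simps)
      moreover have "0 \<le> (a - c)^2" by simp
      ultimately show ?thesis by linarith
    qed
    have sq1: "a^2 \<le> 2 * a^2" for a :: real by simp
    show "(coef K J \<theta> e)^2 \<le> 2 * (alpha K J \<theta> (fst e) (snd e))^2 +
            (if fst e = snd e then 0 else 2 * (alpha K J \<theta> (snd e) (fst e))^2)"
    proof (cases "fst e = snd e")
      case True then show ?thesis using sq1[of "alpha K J \<theta> (fst e) (snd e)"] by (simp add: coef_def)
    next
      case False then show ?thesis using sq[of "alpha K J \<theta> (fst e) (snd e)" "alpha K J \<theta> (snd e) (fst e)"] by (simp add: coef_def)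
    qed
  qed
  also have "\<dots> = (\<Sum>i<n. \<Sum>j<n. 2 * (alpha K J \<theta> i j)^2)"
    by (subst split_sq_sum) (simp add: if_distrib)
  also have "\<dots> = 2 * (\<Sum>i<n. \<Sum>j<n. \<Sum>kl\<in>Bn K J. (if i \<in> J (fst kl) (snd kl) \<and> j \<in> J (snd kl) (fst kl)
      then (w kl * u kl i * v kl j)^2 else 0))"
    unfolding a2 by (simp add: sum_distrib_left)
  also have "(\<Sum>i<n. \<Sum>j<n. \<Sum>kl\<in>Bn K J. (if i \<in> J (fst kl) (snd kl) \<and> j \<in> J (snd kl) (fst kl)
      then (w kl * u kl i * v kl j)^2 else 0))
     = (\<Sum>kl\<in>Bn K J. \<Sum>i<n. \<Sum>j<n. (if i \<in> J (fst kl) (snd kl) \<and> j \<in> J (snd kl) (fst kl)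
      then (w kl * u kl i * v kl j)^2 else 0))"
    by (rule swap3[symmetric])
  also have "\<dots> = (\<Sum>kl\<in>Bn K J. \<Sum>i\<in>J (fst kl) (snd kl). \<Sum>j\<in>J (snd kl) (fst kl). (w kl * u kl i * v kl j)^2)"
    by (intro sum.cong refl sum_restrict2 J_sub) (auto dest: Bn_sub)
  also have "\<dots> = (\<Sum>kl\<in>Bn K J. (w kl)^2 * ((L2_set (u kl) (J (fst kl) (snd kl)))^2 * (L2_set (v kl) (J (snd kl) (fst kl)))^2))"
  proof (rule sum.cong[OF refl])
    fix kl
    have "(\<Sum>i\<in>J (fst kl) (snd kl). \<Sum>j\<in>J (snd kl) (fst kl). (w kl * u kl i * v kl j)^2)
        = (\<Sum>i\<in>J (fst kl) (snd kl). \<Sum>j\<in>J (snd kl) (fst kl). ((w kl)^2 * (u kl i)^2) * (v kl j)^2)"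
      by (simp add: power_mult_distrib)
    also have "\<dots> = (\<Sum>i\<in>J (fst kl) (snd kl). ((w kl)^2 * (u kl i)^2) * (\<Sum>j\<in>J (snd kl) (fst kl). (v kl j)^2))"
      by (simp only: sum_distrib_left)
    also have "\<dots> = (w kl)^2 * (\<Sum>i\<in>J (fst kl) (snd kl). (u kl i)^2) * (\<Sum>j\<in>J (snd kl) (fst kl). (v kl j)^2)"
      by (subst sum_distrib_right[symmetric]) (simp only: sum_distrib_left)
    finally show "(\<Sum>i\<in>J (fst kl) (snd kl). \<Sum>j\<in>J (snd kl) (fst kl). (w kl * u kl i * v kl j)^2)
      = (w kl)^2 * ((L2_set (u kl) (J (fst kl) (snd kl)))^2 * (L2_set (v kl) (J (snd kl) (fst kl)))^2)"
      unfolding L2_sq by simp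
  qed
  also have "\<dots> \<le> (\<Sum>kl\<in>Bn K J. (w kl)^2 * ((5/4)^2 * (5/4)^2))"
  proof (rule sum_mono)
    fix kl assume kl: "kl \<in> Bn K J"
    show "(w kl)^2 * ((L2_set (u kl) (J (fst kl) (snd kl)))^2 * (L2_set (v kl) (J (snd kl) (fst kl)))^2)
        \<le> (w kl)^2 * ((5/4)^2 * (5/4)^2)"
      using uv[OF kl] by (intro mult_left_mono mult_mono power_mono) auto
  qed
  also have "\<dots> = (L2_set w (Bn K J))^2 * ((5/4)^2 * (5/4)^2)"
    by (simp add: L2_sq sum_distrib_right)
  also have "\<dots> \<le> (5/4)^2 * ((5/4)^2 * (5/4)^2)"
    by (intro mult_right_mono power_mono w) auto
  finally have "(\<Sum>e\<in>upper_idx n. (coef K J \<theta> e)^2) \<le> 2 * ((5/4)^2 * ((5/4)^2 * (5/4)^2))" by simp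
  then show ?thesis by (simp add: power2_eq_square)
qed

end

context
  fixes n K :: nat and G :: "nat \<Rightarrow> nat set" and J :: "nat \<Rightarrow> nat \<Rightarrow> nat set"
  assumes cover: "(\<Union>k<K. G k) = {..<n}"
    and disj: "\<forall>k<K. \<forall>l<K. k \<noteq> l \<longrightarrow> G k \<inter> G l = {}"
    and JG: "\<forall>k<K. \<forall>l<K. J k l \<subseteq> G k"
begin

lemma J_fin': "k < K \<Longrightarrow> l < K \<Longrightarrow> finite (J k l)"
  using J_fin[OF cover disj JG] .

lemma G_fin: "k < K \<Longrightarrow> finite (G k)"
proof -
  assume "k < K"
  then have "G k \<subseteq> {..<n}" using cover by blast
  then show ?thesis using finite_subset by blast
qed

lemma card_Theta:
  "finite (Theta K J) \<and> real (card (Theta K J)) \<le> exp (27 * real (\<Sum>k<K. \<Sum>l<K. card (J k l)))"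
proof -
  define B where "B = {..<K} \<times> {..<K}"
  define Jc where "Jc = (\<Sum>k<K. \<Sum>l<K. card (J k l))"
  have finB: "finite (Bn K J)" by (rule finite_Bn)
  have finJ: "finite (J (fst kl) (snd kl))" "finite (J (snd kl) (fst kl))" if "kl \<in> Bn K J" for kl
    using that Bn_sub[OF cover disj JG] J_fin' by auto
  have finT: "finite (Theta K J)"
  proof -
    have f: "finite (net (J (fst kl) (snd kl)) \<times> net (J (snd kl) (fst kl)))" if "kl \<in> Bn K J" for kl
      using net_card(1)[OF finJ(1)[OF that]] net_card(1)[OF finJ(2)[OF that]] by simp
    have "finite (PiE (Bn K J) (\<lambda>kl. net (J (fst kl) (snd kl)) \<times> net (J (snd kl) (fst kl))))"
      by (rule finite_PiE[OF finB f])
    then show ?thesis unfolding Theta_def using net_card(1)[OF finB] by simp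
  qed
  have Jc1: "(\<Sum>kl\<in>B. card (J (fst kl) (snd kl))) = Jc"
    unfolding B_def Jc_def by (subst sum.cartesian_product) (simp add: case_prod_beta)
  have Jc2: "(\<Sum>kl\<in>B. card (J (snd kl) (fst kl))) = Jc"
  proof -
    have "(\<Sum>kl\<in>B. card (J (snd kl) (fst kl))) = (\<Sum>k<K. \<Sum>l<K. card (J l k))"
      unfolding B_def by (subst sum.cartesian_product) (simp add: case_prod_beta)
    also have "\<dots> = Jc" unfolding Jc_def by (rule sum.swap)
    finally show ?thesis .
  qed
  have BnB: "Bn K J \<subseteq> B" by (auto simp: Bn_def B_def)
  have s1: "(\<Sum>kl\<in>Bn K J. card (J (fst kl) (snd kl))) \<le> Jc"
    using sum_mono2[of B "Bn K J" "\<lambda>kl. card (J (fst kl) (snd kl))"] BnB Jc1 by (simp add: B_def)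
  have s2: "(\<Sum>kl\<in>Bn K J. card (J (snd kl) (fst kl))) \<le> Jc"
    using sum_mono2[of B "Bn K J" "\<lambda>kl. card (J (snd kl) (fst kl))"] BnB Jc2 by (simp add: B_def)
  have s0: "card (Bn K J) \<le> (\<Sum>kl\<in>Bn K J. card (J (fst kl) (snd kl)))"
  proof -
    have "card (Bn K J) = (\<Sum>kl\<in>Bn K J. 1)" by simp
    also have "\<dots> \<le> (\<Sum>kl\<in>Bn K J. card (J (fst kl) (snd kl)))"
    proof (rule sum_mono)
      fix kl assume kl: "kl \<in> Bn K J"
      then have "J (fst kl) (snd kl) \<noteq> {}" by (simp add: Bn_def)
      then show "1 \<le> card (J (fst kl) (snd kl))" using finJ[OF kl]
        by (simp add: Suc_le_eq card_gt_0_iff)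
    qed
    finally show ?thesis .
  qed
  have "card (Theta K J) = card (net (Bn K J)) *
      (\<Prod>kl\<in>Bn K J. card (net (J (fst kl) (snd kl))) * card (net (J (snd kl) (fst kl))))"
    unfolding Theta_def card_cartesian_product card_PiE[OF finB] ..
  also have "\<dots> \<le> 512 ^ card (Bn K J) *
      (\<Prod>kl\<in>Bn K J. 512 ^ card (J (fst kl) (snd kl)) * 512 ^ card (J (snd kl) (fst kl)))"
    by (intro mult_mono prod_mono net_card(2) finB conjI) (auto simp: finJ)
  also have "\<dots> = 512 ^ (card (Bn K J) + (\<Sum>kl\<in>Bn K J. card (J (fst kl) (snd kl)) + card (J (snd kl) (fst kl))))"
    by (simp add: power_add power_sum prod.distrib)
  also have "\<dots> \<le> 512 ^ (3 * Jc)"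
    using s0 s1 s2 by (intro power_increasing) (auto simp: sum.distrib)
  also have "\<dots> = 2 ^ (27 * Jc)" by (simp add: power_mult)
  finally have c: "card (Theta K J) \<le> 2 ^ (27 * Jc)" .
  have "real (card (Theta K J)) \<le> real (2 ^ (27 * Jc))"
    using c by (rule of_nat_mono)
  also have "\<dots> = 2 ^ (27 * Jc)" by simp
  also have "(2::real) ^ (27 * Jc) \<le> exp 1 ^ (27 * Jc)"
    using exp_ge_add_one_self[of 1] by (intro power_mono) auto
  also have "\<dots> = exp (real (27 * Jc) * 1)" by (rule exp_of_nat_mult[symmetric])
  finally show ?thesis using finT by (simp add: Jc_def)
qed

lemma opG_le:
  assumes k: "k < K" and l: "l < K"
  shows "op_norm (G k) (G l) (proj_block J k l X) \<le> op_norm (J k l) (J l k) X"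
proof (rule op_least)
  fix v assume v: "L2_set v (G l) \<le> 1"
  have JkG: "J k l \<subseteq> G k" and JlG: "J l k \<subseteq> G l" using JG k l by auto
  have fGl: "finite (G l)" and fGk: "finite (G k)" using G_fin k l by auto
  have row: "(\<Sum>j\<in>G l. proj_block J k l X i j * v j) = (if i \<in> J k l then (\<Sum>j\<in>J l k. X i j * v j) else 0)" for i
  proof -
    have "(\<Sum>j\<in>G l. proj_block J k l X i j * v j) = (\<Sum>j\<in>G l. if j \<in> J l k then (if i \<in> J k l then X i j * v j else 0) else 0)"
      by (intro sum.cong refl) (auto simp: proj_block_def)
    also have "\<dots> = (\<Sum>j\<in>G l \<inter> J l k. (if i \<in> J k l then X i j * v j else 0))"
      by (rule sum.inter_restrict[OF fGl, symmetric])
    also have "G l \<inter> J l k = J l k" using JlG by blast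
    finally show ?thesis by auto
  qed
  have "L2_set (\<lambda>i. \<Sum>j\<in>G l. proj_block J k l X i j * v j) (G k)
      = L2_set (\<lambda>i. if i \<in> J k l then (\<Sum>j\<in>J l k. X i j * v j) else 0) (G k)"
    unfolding row ..
  also have "\<dots> = L2_set (\<lambda>i. \<Sum>j\<in>J l k. X i j * v j) (J k l)"
  proof -
    have "(\<Sum>i\<in>G k. (if i \<in> J k l then (\<Sum>j\<in>J l k. X i j * v j) else 0)^2)
        = (\<Sum>i\<in>J k l. (if i \<in> J k l then (\<Sum>j\<in>J l k. X i j * v j) else 0)^2)"
      by (rule sum.mono_neutral_right[OF fGk JkG]) auto
    also have "\<dots> = (\<Sum>i\<in>J k l. (\<Sum>j\<in>J l k. X i j * v j)^2)" by simp
    finally show ?thesis unfolding L2_set_def by simp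
  qed
  also have "\<dots> \<le> op_norm (J k l) (J l k) X"
  proof (rule op_upper)
    have "(\<Sum>j\<in>J l k. (v j)^2) \<le> (\<Sum>j\<in>G l. (v j)^2)"
      by (rule sum_mono2[OF fGl JlG]) simp
    then have "L2_set v (J l k) \<le> L2_set v (G l)" unfolding L2_set_def by simp
    then show "L2_set v (J l k) \<le> 1" using v by linarith
  qed
  finally show "L2_set (\<lambda>i. \<Sum>j\<in>G l. proj_block J k l X i j * v j) (G k) \<le> op_norm (J k l) (J l k) X" .
qed

end

context
  fixes n K :: nat and G :: "nat \<Rightarrow> nat set" and J :: "nat \<Rightarrow> nat \<Rightarrow> nat set"
  assumes cover: "(\<Union>k<K. G k) = {..<n}"
    and disj: "\<forall>k<K. \<forall>l<K. k \<noteq> l \<longrightarrow> G k \<inter> G l = {}"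
    and JG: "\<forall>k<K. \<forall>l<K. J k l \<subseteq> G k"
begin

lemma det:
  fixes p :: "nat \<Rightarrow> nat \<Rightarrow> real" and b :: "nat \<times> nat \<Rightarrow> bool"
  shows "\<exists>\<theta>\<in>Theta K J. 0 \<le> Fth K J p \<theta> b \<and>
    (\<Sum>k<K. \<Sum>l<K. (op_norm (G k) (G l) (proj_block J k l (Xi p b)))^2)
      \<le> ((16/7)^2 * (4/3)^2) * (Fth K J p \<theta> b)^2"
proof -
  define X where "X = Xi p b"
  define B where "B = {..<K} \<times> {..<K}"
  define S where "S = (\<lambda>kl. net (J (fst kl) (snd kl)) \<times> net (J (snd kl) (fst kl)))"
  define bl where "bl = (\<lambda>kl u v. bil (J (fst kl) (snd kl)) (J (snd kl) (fst kl)) X u v)"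
  define Mx where "Mx = (\<lambda>kl. Max ((\<lambda>(u,v). bl kl u v) ` S kl))"
  define sG where "sG = (\<lambda>kl. op_norm (G (fst kl)) (G (snd kl)) (proj_block J (fst kl) (snd kl) X))"
  have finB: "finite B" by (simp add: B_def)
  have BnB: "Bn K J \<subseteq> B" by (auto simp: Bn_def B_def)
  have finJ: "finite (J (fst kl) (snd kl))" "finite (J (snd kl) (fst kl))" if "kl \<in> B" for kl
    using that J_fin'[OF cover disj JG] by (auto simp: B_def)
  have finS: "finite (S kl)" if "kl \<in> B" for kl
    using net_card(1)[OF finJ(1)[OF that]] net_card(1)[OF finJ(2)[OF that]] by (simp add: S_def)
  have neS: "((\<lambda>_. 0), (\<lambda>_. 0)) \<in> S kl" for kl by (simp add: S_def zero_in_net)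
  have sig: "sG kl \<le> 16/7 * Mx kl" if "kl \<in> B" for kl
  proof -
    have "sG kl \<le> op_norm (J (fst kl) (snd kl)) (J (snd kl) (fst kl)) X"
      unfolding sG_def using that by (intro opG_le[OF cover disj JG]) (auto simp: B_def)
    also have "\<dots> \<le> 16/7 * Mx kl"
      unfolding Mx_def bl_def S_def by (rule net_op[OF finJ(1)[OF that] finJ(2)[OF that]])
    finally show ?thesis .
  qed
  have sG0: "0 \<le> sG kl" for kl by (simp add: sG_def op_nonneg)
  have Mx0: "0 \<le> Mx kl" if "kl \<in> B" for kl using sig[OF that] sG0[of kl] by linarith
  have MxZ: "Mx kl = 0" if "kl \<in> B - Bn K J" for kl
  proof -
    have e: "J (fst kl) (snd kl) = {}" using that by (auto simp: Bn_def B_def)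
    have "(\<lambda>(u,v). bl kl u v) ` S kl = {0}"
      using neS[of kl] by (auto simp: bl_def bil_def e)
    then show ?thesis by (simp add: Mx_def)
  qed
  have Sx: "(\<Sum>k<K. \<Sum>l<K. (op_norm (G k) (G l) (proj_block J k l (Xi p b)))^2) = (\<Sum>kl\<in>B. (sG kl)^2)"
    unfolding B_def sG_def X_def by (subst sum.cartesian_product) (simp add: case_prod_beta)
  also have "\<dots> \<le> (\<Sum>kl\<in>B. (16/7 * Mx kl)^2)"
    by (intro sum_mono power_mono sig sG0)
  also have "\<dots> = (16/7)^2 * (\<Sum>kl\<in>B. (Mx kl)^2)"
    unfolding sum_distrib_left by (rule sum.cong[OF refl]) (rule power_mult_distrib)
  also have "(\<Sum>kl\<in>B. (Mx kl)^2) = (\<Sum>kl\<in>Bn K J. (Mx kl)^2)"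
    by (rule sum.mono_neutral_right[OF finB BnB]) (simp add: MxZ)
  also have "\<dots> = (L2_set Mx (Bn K J))^2" by (simp add: L2_sq)
  finally have S1: "(\<Sum>k<K. \<Sum>l<K. (op_norm (G k) (G l) (proj_block J k l (Xi p b)))^2)
      \<le> (16/7)^2 * (L2_set Mx (Bn K J))^2" .
  define W where "W = Max ((\<lambda>w. \<Sum>kl\<in>Bn K J. w kl * Mx kl) ` net (Bn K J))"
  have L2W: "L2_set Mx (Bn K J) \<le> 4/3 * W"
    unfolding W_def by (rule net_vec[OF finite_Bn])
  have W0: "0 \<le> W" using L2W L2_set_nonneg[of Mx "Bn K J"] by linarith
  have "W \<in> (\<lambda>w. \<Sum>kl\<in>Bn K J. w kl * Mx kl) ` net (Bn K J)"
    unfolding W_def using net_card(1)[OF finite_Bn] zero_in_net by (intro Max_in) auto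
  then obtain ws where ws: "ws \<in> net (Bn K J)" "W = (\<Sum>kl\<in>Bn K J. ws kl * Mx kl)" by blast
  have exq: "\<exists>q. q \<in> S kl \<and> Mx kl = bl kl (fst q) (snd q)" if "kl \<in> Bn K J" for kl
  proof -
    have kB: "kl \<in> B" using that BnB by blast
    have "Mx kl \<in> (\<lambda>(u,v). bl kl u v) ` S kl"
      unfolding Mx_def using finS[OF kB] neS[of kl] by (intro Max_in) auto
    then obtain q where "q \<in> S kl" "Mx kl = (\<lambda>(u,v). bl kl u v) q" by blast
    then show ?thesis by (intro exI[of _ q]) (simp add: case_prod_beta)
  qed
  define U where "U = (\<lambda>kl. if kl \<in> Bn K J then (SOME q. q \<in> S kl \<and> Mx kl = bl kl (fst q) (snd q)) else undefined)"
  have U: "U kl \<in> S kl \<and> Mx kl = bl kl (fst (U kl)) (snd (U kl))" if "kl \<in> Bn K J" for kl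
    using someI_ex[OF exq[OF that]] that by (simp add: U_def)
  define \<theta> where "\<theta> = (ws, U)"
  have th: "\<theta> \<in> Theta K J"
    unfolding \<theta>_def Theta_def mem_Times_iff fst_conv snd_conv
  proof
    show "ws \<in> net (Bn K J)" by (rule ws(1))
    show "U \<in> PiE (Bn K J) (\<lambda>kl. net (J (fst kl) (snd kl)) \<times> net (J (snd kl) (fst kl)))"
      unfolding PiE_iff extensional_def using U by (auto simp: U_def S_def)
  qed
  have F: "Fth K J p \<theta> b = W"
    unfolding Fth_def ws(2) \<theta>_def fst_conv snd_conv
  proof (rule sum.cong[OF refl])
    fix kl assume kl: "kl \<in> Bn K J"
    show "ws kl * bil (J (fst kl) (snd kl)) (J (snd kl) (fst kl)) (Xi p b) (fst (U kl)) (snd (U kl)) = ws kl * Mx kl"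
      using U[OF kl] by (simp add: bl_def X_def)
  qed
  have "(16/7)^2 * (L2_set Mx (Bn K J))^2 \<le> (16/7)^2 * (4/3 * W)^2"
    using L2W by (intro mult_left_mono power_mono) auto
  also have "\<dots> = ((16/7)^2 * (4/3)^2) * W^2" by (simp only: power_mult_distrib mult.assoc)
  finally have S2: "(16/7)^2 * (L2_set Mx (Bn K J))^2 \<le> ((16/7)^2 * (4/3)^2) * W^2" .
  have S3: "(\<Sum>k<K. \<Sum>l<K. (op_norm (G k) (G l) (proj_block J k l (Xi p b)))^2)
      \<le> ((16/7)^2 * (4/3)^2) * W^2" using S1 S2 by (rule order.trans)
  show ?thesis
  proof (rule bexI[OF _ th])
    show "0 \<le> Fth K J p \<theta> b \<and>
      (\<Sum>k<K. \<Sum>l<K. (op_norm (G k) (G l) (proj_block J k l (Xi p b)))^2)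
        \<le> ((16/7)^2 * (4/3)^2) * (Fth K J p \<theta> b)^2"
      unfolding F using S3 W0 by blast
  qed
qed

end

theorem lemma7:
  shows "\<exists>C1 > 0. \<exists>C2 > 0. \<forall>(n::nat) (K::nat) (G::nat \<Rightarrow> nat set) (J::nat \<Rightarrow> nat \<Rightarrow> nat set)
      (p::nat \<Rightarrow> nat \<Rightarrow> real) (x::real).
      (\<Union>k<K. G k) = {..<n} \<longrightarrow>
      (\<forall>k<K. \<forall>l<K. k \<noteq> l \<longrightarrow> G k \<inter> G l = {}) \<longrightarrow>
      (\<forall>k<K. \<forall>l<K. J k l \<subseteq> G k) \<longrightarrow>
      (\<forall>i j. i \<le> j \<and> j < n \<longrightarrow> 0 \<le> p i j \<and> p i j \<le> 1) \<longrightarrow>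
      x > 0 \<longrightarrow>
      measure_pmf.prob (bern_law n p)
        {b. (\<Sum>k<K. \<Sum>l<K. (op_norm (G k) (G l) (proj_block J k l (Xi p b)))^2)
              \<le> C1 * real (\<Sum>k<K. \<Sum>l<K. card (J k l)) + C2 * x}
        \<ge> 1 - exp (- x)"
proof -
  define c0 :: real where "c0 = (16/7)^2 * (4/3)^2"
  have c0p: "c0 > 0" by (simp add: c0_def)
  have main: "measure_pmf.prob (bern_law n p)
        {b. (\<Sum>k<K. \<Sum>l<K. (op_norm (G k) (G l) (proj_block J k l (Xi p b)))^2)
              \<le> (432 * c0) * real (\<Sum>k<K. \<Sum>l<K. card (J k l)) + (16 * c0) * x}
        \<ge> 1 - exp (- x)"
    if cover: "(\<Union>k<K. G k) = {..<n}"
      and disj: "\<forall>k<K. \<forall>l<K. k \<noteq> l \<longrightarrow> G k \<inter> G l = {}"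
      and JG: "\<forall>k<K. \<forall>l<K. J k l \<subseteq> G k"
      and pp: "\<forall>i j. i \<le> j \<and> j < n \<longrightarrow> 0 \<le> p i j \<and> p i j \<le> 1"
      and xp: "x > 0"
    for n K G J p x
  proof -
    define Jc where "Jc = real (\<Sum>k<K. \<Sum>l<K. card (J k l))"
    have Jc0: "0 \<le> Jc" unfolding Jc_def by (rule of_nat_0_le_iff)
    define t where "t = sqrt (16 * (27 * Jc + x))"
    have t2: "t^2 = 16 * (27 * Jc + x)" using Jc0 xp by (simp add: t_def)
    have tp: "t > 0" using Jc0 xp by (simp add: t_def)
    define SS where "SS = (\<lambda>b. (\<Sum>k<K. \<Sum>l<K. (op_norm (G k) (G l) (proj_block J k l (Xi p b)))^2))"
    define E where "E = {b. SS b \<le> (432 * c0) * Jc + (16 * c0) * x}"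
    have thr: "(432 * c0) * Jc + (16 * c0) * x = c0 * t^2" unfolding t2 by (simp add: algebra_simps)
    define Th where "Th = Theta K J"
    have finTh: "finite Th" and cardTh: "real (card Th) \<le> exp (27 * Jc)"
      using card_Theta[OF cover disj JG] by (auto simp: Th_def Jc_def)
    have sub: "UNIV - E \<subseteq> (\<Union>\<theta>\<in>Th. {b. t \<le> Fth K J p \<theta> b})"
    proof
      fix b assume "b \<in> UNIV - E"
      then have gt: "c0 * t^2 < SS b" unfolding E_def thr by auto
      obtain \<theta> where th: "\<theta> \<in> Th" and F0: "0 \<le> Fth K J p \<theta> b"
          and Sle: "SS b \<le> c0 * (Fth K J p \<theta> b)^2"
        using det[OF cover disj JG, of p b] unfolding SS_def Th_def c0_def by blast
      have "c0 * t^2 < c0 * (Fth K J p \<theta> b)^2" using gt Sle by linarith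
      then have "t^2 < (Fth K J p \<theta> b)^2" using c0p by simp
      then have "t < Fth K J p \<theta> b" using F0 by (rule power_less_imp_less_base)
      then have "t \<le> Fth K J p \<theta> b" by simp
      then show "b \<in> (\<Union>\<theta>\<in>Th. {b. t \<le> Fth K J p \<theta> b})" using th by blast
    qed
    have each: "measure_pmf.prob (bern_law n p) {b. t \<le> Fth K J p \<theta> b} \<le> exp (-(t^2)/16)"
      if th: "\<theta> \<in> Th" for \<theta>
    proof -
      have "{b. t \<le> Fth K J p \<theta> b} =
          {b. t \<le> (\<Sum>e\<in>upper_idx n. coef K J \<theta> e * (of_bool (b e) - case_prod p e))}"
        using Fth_eq[OF cover disj JG] by simp
      also have "measure_pmf.prob (bern_law n p) \<dots> \<le> exp (-(t^2)/16)"
        by (rule hoeff_lin[OF pp tp coef_var[OF cover disj JG th[unfolded Th_def]]])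
      finally show ?thesis .
    qed
    have "measure_pmf.prob (bern_law n p) (UNIV - E)
        \<le> measure_pmf.prob (bern_law n p) (\<Union>\<theta>\<in>Th. {b. t \<le> Fth K J p \<theta> b})"
      using sub by (intro measure_pmf.finite_measure_mono) auto
    also have "\<dots> \<le> (\<Sum>\<theta>\<in>Th. measure_pmf.prob (bern_law n p) {b. t \<le> Fth K J p \<theta> b})"
      by (rule measure_pmf.finite_measure_subadditive_finite[OF finTh]) auto
    also have "\<dots> \<le> (\<Sum>\<theta>\<in>Th. exp (-(t^2)/16))"
      by (rule sum_mono) (rule each)
    also have "\<dots> = real (card Th) * exp (-(t^2)/16)" by simp
    also have "\<dots> \<le> exp (- x)"
    proof -
      have "real (card Th) * exp (-(t^2)/16) \<le> exp (27 * Jc) * exp (-(t^2)/16)"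
        by (rule mult_right_mono[OF cardTh]) simp
      also have "\<dots> = exp (27 * Jc + (-(t^2)/16))" by (simp flip: exp_add)
      also have "27 * Jc + (-(t^2)/16) = - x" unfolding t2 by (simp add: field_simps)
      finally show ?thesis .
    qed
    finally have c: "measure_pmf.prob (bern_law n p) (UNIV - E) \<le> exp (- x)" .
    have "measure_pmf.prob (bern_law n p) (UNIV - E) = 1 - measure_pmf.prob (bern_law n p) E"
      using measure_pmf.prob_compl[of E "bern_law n p"] by simp
    then have "1 - exp (- x) \<le> measure_pmf.prob (bern_law n p) E" using c by linarith
    then show ?thesis unfolding E_def SS_def Jc_def .
  qed
  show ?thesis
    by (rule exI[of _ "432 * c0"], rule conjI, simp add: c0p,
        rule exI[of _ "16 * c0"], rule conjI, simp add: c0p) (blast intro: main)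
qed

end
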